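(* Let $n\ge 1$ and let $G$ be a graph on the vertex set $[n]=\{1,\dots,n\}$. Assume there exists an involution $\tau$ of $[n]$ (a permutation with $\tau^2=\mathrm{id}$, possibly with fixed points) such that every $3$-element subset $S\subseteq[n]$ satisfies $$|E(G[S])|+|E(G[\tau(S)])|\ge 2 .$$ Then $|E(G)|\ge |E(T(n))|=\binom{\lfloor n/2\rfloor}{2}+\binom{\lceil n/2\rceil}{2}$.
   Context: $G[A]$ denotes the subgraph of $G$ induced on the vertex subset $A$, and $\tau(S)=\{\tau(s):s\in S\}$. $T(n)$ denotes the graph on $[n]$ that is the disjoint union of two cliques of sizes $\lfloor n/2\rfloor$ and $\lceil n/2\rceil$. *)

theory Defs
  imports Main
begin

definition simple_graph :: "'a set \<Rightarrow> 'a set set \<Rightarrow> bool" where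
  "simple_graph V E \<longleftrightarrow> (\<forall>e\<in>E. e \<subseteq> V \<and> card e = 2)"

definition induced_edges :: "'a set set \<Rightarrow> 'a set \<Rightarrow> 'a set set" where
  "induced_edges E A = {e \<in> E. e \<subseteq> A}"

end

theory Submission
  imports Defs
begin

definition PP :: "'a set \<Rightarrow> 'a set set" where
  "PP A = {e. e \<subseteq> A \<and> card e = 2}"

definition BB :: "nat \<Rightarrow> nat" where
  "BB k = (k div 2 choose 2) + ((k + 1) div 2 choose 2)"

lemma choose2_Suc: "Suc a choose 2 = a + (a choose 2)"
  by (simp add: numeral_2_eq_2)

lemma BB_step: "BB (k + 2) = BB k + k"
proof -
  have a: "(k + 2) div 2 = Suc (k div 2)" by simp
  have b: "(k + 2 + 1) div 2 = Suc ((k + 1) div 2)" by simp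
  have c: "k div 2 + (k + 1) div 2 = k" by presburger
  show ?thesis unfolding BB_def a b choose2_Suc using c by simp
qed

lemma BB_le: "2 * BB k \<le> k choose 2"
proof (induction k rule: nat_less_induct)
  case (1 k)
  show ?case
  proof (cases "k < 2")
    case True
    then have "k = 0 \<or> k = 1" by auto
    then show ?thesis by (auto simp: BB_def)
  next
    case False
    then obtain j where j: "k = j + 2" by (metis add.commute le_Suc_ex not_less)
    have "2 * BB j \<le> j choose 2" using 1 j by simp
    moreover have "k choose 2 = (j choose 2) + 2 * j + 1"
      unfolding j using choose2_Suc[of "Suc j"] choose2_Suc[of j] by simp
    ultimately show ?thesis unfolding j BB_step by simp
  qed
qed

lemma finite_PP: "finite A \<Longrightarrow> finite (PP A)"
  unfolding PP_def by (rule finite_subset[of _ "Pow A"]) auto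

lemma card_PP: "finite A \<Longrightarrow> card (PP A) = card A choose 2"
  unfolding PP_def by (rule n_subsets)

lemma main:
  fixes W :: "'a set \<Rightarrow> nat"
  assumes "finite V"
    and "\<forall>x\<in>V. \<forall>y\<in>V. \<forall>z\<in>V. x \<noteq> y \<and> y \<noteq> z \<and> x \<noteq> z \<longrightarrow> W {x,y} + W {y,z} + W {x,z} \<ge> 2"
  shows "(\<Sum>e\<in>PP V. W e) \<ge> 2 * BB (card V)"
  using assms
proof (induction "card V" arbitrary: V rule: less_induct)
  case less
  show ?case
  proof (cases "\<forall>e\<in>PP V. W e \<ge> 1")
    case True
    have "2 * BB (card V) \<le> card (PP V)" using BB_le card_PP[OF less.prems(1)] by simp
    also have "\<dots> = (\<Sum>e\<in>PP V. 1)" by simp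
    also have "\<dots> \<le> (\<Sum>e\<in>PP V. W e)" using True by (intro sum_mono) auto
    finally show ?thesis .
  next
    case False
    then obtain e where e: "e \<in> PP V" "W e = 0" by force
    then obtain u v where uv: "e = {u,v}" "u \<noteq> v" "u \<in> V" "v \<in> V"
      unfolding PP_def by (auto simp: card_2_iff)
    define V' where "V' = V - {u,v}"
    have finV': "finite V'" using less.prems(1) V'_def by simp
    have cV': "card V' = card V - 2" using uv less.prems(1) unfolding V'_def
      by (simp add: card_Diff_subset)
    have cV2: "card V \<ge> 2"
    proof -
      have "card {u,v} \<le> card V" using uv less.prems(1) by (intro card_mono) auto
      then show ?thesis using uv by simp
    qed
    have hV': "\<forall>x\<in>V'. \<forall>y\<in>V'. \<forall>z\<in>V'. x \<noteq> y \<and> y \<noteq> z \<and> x \<noteq> z \<longrightarrow> W {x,y} + W {y,z} + W {x,z} \<ge> 2"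
    proof (intro ballI impI)
      fix x y z assume "x \<in> V'" "y \<in> V'" "z \<in> V'" "x \<noteq> y \<and> y \<noteq> z \<and> x \<noteq> z"
      moreover have "V' \<subseteq> V" unfolding V'_def by blast
      ultimately show "W {x,y} + W {y,z} + W {x,z} \<ge> 2"
        using less.prems(2)[rule_format, of x y z] by blast
    qed
    have lt: "card V' < card V" using cV' cV2 by simp
    have IH: "(\<Sum>e\<in>PP V'. W e) \<ge> 2 * BB (card V')"
      by (rule less.hyps[OF lt finV' hV'])
    have pair: "W {u,x} + W {v,x} \<ge> 2" if "x \<in> V'" for x
    proof -
      have "x \<in> V" "x \<noteq> u" "x \<noteq> v" using that V'_def by auto
      then have "W {u,v} + W {v,x} + W {u,x} \<ge> 2" using less.prems(2)[rule_format, of u v x] uv by blast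
      then show ?thesis using e uv by simp
    qed
    define A1 where "A1 = (\<lambda>x. {u,x}) ` V'"
    define A2 where "A2 = (\<lambda>x. {v,x}) ` V'"
    have V'u: "u \<notin> V'" "v \<notin> V'" "V' \<subseteq> V" unfolding V'_def by auto
    have inj1: "inj_on (\<lambda>x. {u,x}) V'"
    proof (rule inj_onI)
      fix x y assume "x \<in> V'" "y \<in> V'" "{u,x} = {u,y}"
      then show "x = y" using V'u by (metis doubleton_eq_iff)
    qed
    have inj2: "inj_on (\<lambda>x. {v,x}) V'"
    proof (rule inj_onI)
      fix x y assume "x \<in> V'" "y \<in> V'" "{v,x} = {v,y}"
      then show "x = y" using V'u by (metis doubleton_eq_iff)
    qed
    have s1: "sum W A1 = (\<Sum>x\<in>V'. W {u,x})" unfolding A1_def using sum.reindex[OF inj1] by simp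
    have s2: "sum W A2 = (\<Sum>x\<in>V'. W {v,x})" unfolding A2_def using sum.reindex[OF inj2] by simp
    have fA1: "finite A1" "finite A2" using finV' A1_def A2_def by auto
    have nP: "u \<notin> e \<and> v \<notin> e" if "e \<in> PP V'" for e
      using that V'u unfolding PP_def by blast
    have i1: "u \<in> e" if "e \<in> A1" for e using that unfolding A1_def by blast
    have i2: "v \<in> e \<and> u \<notin> e" if "e \<in> A2" for e
      using that V'u uv(2) unfolding A2_def by blast
    have d1: "PP V' \<inter> A1 = {}" using nP i1 by blast
    have d2: "(PP V' \<union> A1) \<inter> A2 = {}" using nP i1 i2 by blast
    have PPm: "PP V' \<subseteq> PP V" using V'u unfolding PP_def by blast
    have A1m: "A1 \<subseteq> PP V"
    proof
      fix e assume "e \<in> A1"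
      then obtain x where x: "x \<in> V'" "e = {u,x}" unfolding A1_def by blast
      then have "x \<noteq> u" using V'u by blast
      then show "e \<in> PP V" using x V'u uv unfolding PP_def by auto
    qed
    have A2m: "A2 \<subseteq> PP V"
    proof
      fix e assume "e \<in> A2"
      then obtain x where x: "x \<in> V'" "e = {v,x}" unfolding A2_def by blast
      then have "x \<noteq> v" using V'u by blast
      then show "e \<in> PP V" using x V'u uv unfolding PP_def by auto
    qed
    have sub: "PP V' \<union> A1 \<union> A2 \<subseteq> PP V" using PPm A1m A2m by blast
    have cVV: "card V = card V' + 2" using cV' cV2 by simp
    have "2 * BB (card V) = 2 * BB (card V') + 2 * card V'"
      unfolding cVV BB_step by simp
    also have "\<dots> \<le> (\<Sum>e\<in>PP V'. W e) + (\<Sum>x\<in>V'. W {u,x} + W {v,x})"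
    proof -
      have "(\<Sum>x\<in>V'. 2) \<le> (\<Sum>x\<in>V'. W {u,x} + W {v,x})" using pair by (intro sum_mono) auto
      then show ?thesis using IH by simp
    qed
    also have "\<dots> = sum W (PP V') + sum W A1 + sum W A2" unfolding s1 s2 sum.distrib by simp
    also have "\<dots> = sum W (PP V' \<union> A1 \<union> A2)"
      using d1 d2 fA1 finite_PP[OF finV'] by (simp add: sum.union_disjoint)
    also have "\<dots> \<le> sum W (PP V)"
      by (rule sum_mono2[OF finite_PP[OF less.prems(1)] sub]) auto
    finally show ?thesis .
  qed
qed

lemma sub3:
  assumes "p \<in> {a,b,c}" "q \<in> {a,b,c}" "p \<noteq> q"
  shows "{p,q} = {a,b} \<or> {p,q} = {b,c} \<or> {p,q} = {a,c}"
proof -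
  have "p = a \<or> p = b \<or> p = c" "q = a \<or> q = b \<or> q = c" using assms(1,2) by auto
  then show ?thesis using assms(3) by (elim disjE) (simp_all add: insert_commute)
qed
lemma tri0:
  assumes "\<forall>e\<in>E. card e = 2"
  shows "induced_edges E {a,b,c} = {{a,b},{b,c},{a,c}} \<inter> E"
proof
  show "induced_edges E {a,b,c} \<subseteq> {{a,b},{b,c},{a,c}} \<inter> E"
  proof
    fix e assume e: "e \<in> induced_edges E {a,b,c}"
    then have "e \<in> E" "e \<subseteq> {a,b,c}" unfolding induced_edges_def by auto
    moreover obtain p q where "e = {p,q}" "p \<noteq> q" using assms \<open>e \<in> E\<close> by (meson card_2_iff)
    ultimately show "e \<in> {{a,b},{b,c},{a,c}} \<inter> E" using sub3[of p a b c q] by auto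
  qed
  show "{{a,b},{b,c},{a,c}} \<inter> E \<subseteq> induced_edges E {a,b,c}"
    unfolding induced_edges_def by auto
qed

lemma tri:
  assumes "\<forall>e\<in>E. card e = 2" "a \<noteq> b" "b \<noteq> c" "a \<noteq> c"
  shows "card (induced_edges E {a,b,c}) = (if {a,b}\<in>E then 1 else 0) + (if {b,c}\<in>E then 1 else 0) + (if {a,c} \<in> E then 1 else (0::nat))"
proof -
  have "induced_edges E {a,b,c} = {{a,b},{b,c},{a,c}} \<inter> E" by (rule tri0[OF assms(1)])
  then have "card (induced_edges E {a,b,c}) = (\<Sum>e\<in>{{a,b},{b,c},{a,c}}. if e \<in> E then 1 else 0)"
    by (metis (no_types, lifting) card_eq_sum sum.cong sum.inter_restrict finite.emptyI finite.insertI)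
  also have "\<dots> = (if {a,b}\<in>E then 1 else 0) + (if {b,c}\<in>E then 1 else 0) + (if {a,c} \<in> E then 1 else (0::nat))"
    using assms(2-4) by (simp add: doubleton_eq_iff)
  finally show ?thesis .
qed

theorem mainTheorem1:
  fixes n :: nat and E :: "nat set set" and \<tau> :: "nat \<Rightarrow> nat"
  assumes "n \<ge> 1"
    and "simple_graph {1..n} E"
    and "bij_betw \<tau> {1..n} {1..n}"
    and "\<forall>x\<in>{1..n}. \<tau> (\<tau> x) = x"
    and "\<forall>S. S \<subseteq> {1..n} \<and> card S = 3 \<longrightarrow>
           card (induced_edges E S) + card (induced_edges E (\<tau> ` S)) \<ge> 2"
  shows "card E \<ge> (n div 2 choose 2) + ((n + 1) div 2 choose 2)"
proof -
  define V where "V = {1..n}"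
  define I where "I = (\<lambda>e. if e \<in> E then 1 else (0::nat))"
  define W where "W = (\<lambda>e. I e + I (\<tau> ` e))"
  have EP: "E \<subseteq> PP V" using assms(2) unfolding simple_graph_def PP_def V_def by auto
  have c2: "\<forall>e\<in>E. card e = 2" using assms(2) unfolding simple_graph_def by auto
  have finV: "finite V" unfolding V_def by simp
  have inj: "inj_on \<tau> V" using bij_betw_imp_inj_on[OF assms(3)] V_def by simp
  have imV: "\<tau> ` V = V" using bij_betw_imp_surj_on[OF assms(3)] V_def by simp
  have "sum I (PP V) = sum I E"
    by (rule sum.mono_neutral_right[OF finite_PP[OF finV] EP]) (auto simp: I_def)
  then have sI: "sum I (PP V) = card E" by (simp add: I_def)
  have bij: "bij_betw ((`) \<tau>) (PP V) (PP V)"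
  proof (rule bij_betw_imageI)
    show "inj_on ((`) \<tau>) (PP V)"
    proof (rule inj_onI)
      fix a b assume "a \<in> PP V" "b \<in> PP V" "\<tau> ` a = \<tau> ` b"
      then show "a = b" using inj_on_image_eq_iff[OF inj, of a b] unfolding PP_def by blast
    qed
    show "(`) \<tau> ` PP V = PP V"
    proof
      show "(`) \<tau> ` PP V \<subseteq> PP V" unfolding PP_def using inj imV
        by (auto simp: card_image inj_on_subset)
    next
      show "PP V \<subseteq> (`) \<tau> ` PP V"
      proof
        fix f assume f: "f \<in> PP V"
        have fV: "f \<subseteq> V" using f unfolding PP_def by blast
        have "\<tau> ` (\<tau> ` f) = (\<lambda>x. \<tau> (\<tau> x)) ` f" by (simp add: image_image)
        also have "\<dots> = id ` f" using fV assms(4) unfolding V_def by (intro image_cong) auto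
        finally have "f = \<tau> ` (\<tau> ` f)" by simp
        moreover have "\<tau> ` f \<in> PP V" using f inj imV unfolding PP_def
          by (auto simp: card_image inj_on_subset)
        ultimately show "f \<in> (`) \<tau> ` PP V" by blast
      qed
    qed
  qed
  have sI2: "(\<Sum>e\<in>PP V. I (\<tau> ` e)) = sum I (PP V)"
    using sum.reindex_bij_betw[OF bij, of I] by simp
  have sW: "sum W (PP V) = 2 * card E" unfolding W_def sum.distrib sI2 sI by simp
  have trip: "\<forall>x\<in>V. \<forall>y\<in>V. \<forall>z\<in>V. x \<noteq> y \<and> y \<noteq> z \<and> x \<noteq> z \<longrightarrow> W {x,y} + W {y,z} + W {x,z} \<ge> 2"
  proof (intro ballI impI)
    fix x y z assume xyz: "x \<in> V" "y \<in> V" "z \<in> V" "x \<noteq> y \<and> y \<noteq> z \<and> x \<noteq> z"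
    have S: "{x,y,z} \<subseteq> {1..n}" "card {x,y,z} = 3" using xyz V_def by auto
    have d: "\<tau> x \<noteq> \<tau> y" "\<tau> y \<noteq> \<tau> z" "\<tau> x \<noteq> \<tau> z" using xyz inj unfolding inj_on_def by auto
    have "card (induced_edges E {x,y,z}) + card (induced_edges E (\<tau> ` {x,y,z})) \<ge> 2"
      using assms(5) S by blast
    then show "W {x,y} + W {y,z} + W {x,z} \<ge> 2"
      using tri[OF c2] xyz d unfolding W_def I_def by simp
  qed
  have "2 * BB (card V) \<le> sum W (PP V)" by (rule main[OF finV trip])
  moreover have "card V = n" by (simp add: V_def)
  ultimately show ?thesis unfolding sW BB_def by simp
qed

end
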